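(* Assume $\mathcal E=\emptyset$, $K$ has nonempty interior, and all $f_i$ ($i=1,\ldots,m$) and $-c_j$ ($j\in\mathcal I$) are SOS-convex polynomials. Let $d$ be the maximum degree of the $f_i$ and $d_0=\max\{\lceil d/2\rceil,\ \lceil\deg(c_j)/2\rceil\ (j\in\mathcal I)\}$. Then the interior of $\mathcal U$ equals $$\mathcal V_1=\Big\{(v_1,\ldots,v_m):\ \exists\, y\in\mathbb R^{\mathbb N^n_{2d_0}} \text{ with } y_0=1,\ M_{d_0}[y]\succeq 0,\ \langle c_j,y\rangle\ge0\ (j\in\mathcal I),\ v_i>\langle f_i,y\rangle\ (i\in[m])\Big\}.$$ Moreover, a vector $v\in f(K)$ is a weakly Pareto value if and only if it lies on the boundary of the closure of $\mathcal V_1$.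
   Context: $f_1,\ldots,f_m,c_j$ ($j\in\mathcal I$) are real polynomials in $x\in\mathbb R^n$, $K=\{x: c_j(x)\ge0\ (j\in\mathcal I)\}$, $\mathcal U=f(K)+\mathbb R^m_+$ where $f=(f_1,\ldots,f_m)$. A point $x^*\in K$ is weakly Pareto if no $x\in K$ has $f_i(x)<f_i(x^* )$ for all $i$; a weakly Pareto value is $f(x^* )$ for such $x^*$. A polynomial $p$ is SOS-convex if its Hessian satisfies $\nabla^2p(x)=Q(x)^TQ(x)$ for some matrix polynomial $Q$. For $y=(y_\alpha)_{\alpha\in\mathbb N^n_{2k}}$ (with $\mathbb N^n_{t}=\{\alpha\in\mathbb N^n:|\alpha|\le t\}$) and polynomial $p=\sum p_\alpha x^\alpha$ of degree $\le 2k$, $\langle p,y\rangle=\sum_\alpha p_\alpha y_\alpha$; $y_0$ is the entry at $\alpha=0$; the moment matrix $M_k[y]$ is the symmetric matrix indexed by $\alpha,\beta\in\mathbb N^n_k$ with $(\alpha,\beta)$ entry $y_{\alpha+\beta}$. $[m]=\{1,\ldots,m\}$. *)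

theory Defs
  imports "HOL-Analysis.Analysis"
begin

text \<open>Multivariate real polynomials in the variables x $ i (i :: 'n, a finite index type,
so x ranges over R^n with n = CARD('n)) are represented by their coefficient functions
on multi-indices alpha :: 'n => nat, required to have finite support.\<close>

type_synonym 'n mpoly_coeffs = "('n \<Rightarrow> nat) \<Rightarrow> real"

definition is_poly :: "'n mpoly_coeffs \<Rightarrow> bool" where
  "is_poly p \<longleftrightarrow> finite {\<alpha>. p \<alpha> \<noteq> 0}"

definition mdeg :: "('n::finite \<Rightarrow> nat) \<Rightarrow> nat" where
  "mdeg \<alpha> = (\<Sum>i\<in>UNIV. \<alpha> i)"

definition monom_eval :: "('n::finite \<Rightarrow> nat) \<Rightarrow> real^'n \<Rightarrow> real" where
  "monom_eval \<alpha> x = (\<Prod>i\<in>UNIV. (x $ i) ^ (\<alpha> i))"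

definition peval :: "('n::finite) mpoly_coeffs \<Rightarrow> real^'n \<Rightarrow> real" where
  "peval p x = (\<Sum>\<alpha>\<in>{\<alpha>. p \<alpha> \<noteq> 0}. p \<alpha> * monom_eval \<alpha> x)"

text \<open>Total degree (the zero polynomial gets degree 0).\<close>
definition pdeg :: "('n::finite) mpoly_coeffs \<Rightarrow> nat" where
  "pdeg p = Max (insert 0 (mdeg ` {\<alpha>. p \<alpha> \<noteq> 0}))"

definition pdiff :: "'n \<Rightarrow> 'n mpoly_coeffs \<Rightarrow> 'n mpoly_coeffs" where
  "pdiff i p = (\<lambda>\<alpha>. real (\<alpha> i + 1) * p (\<alpha>(i := \<alpha> i + 1)))"

definition sos_convex :: "('n::finite) mpoly_coeffs \<Rightarrow> bool" where
  "sos_convex p \<longleftrightarrow> (\<exists>(r::nat) (Q :: nat \<Rightarrow> 'n \<Rightarrow> 'n mpoly_coeffs).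
      (\<forall>k<r. \<forall>i. is_poly (Q k i)) \<and>
      (\<forall>x i j. peval (pdiff i (pdiff j p)) x = (\<Sum>k<r. peval (Q k i) x * peval (Q k j) x)))"

definition mindices :: "nat \<Rightarrow> ('n::finite \<Rightarrow> nat) set" where
  "mindices t = {\<alpha>. mdeg \<alpha> \<le> t}"

definition riesz :: "('n::finite) mpoly_coeffs \<Rightarrow> (('n \<Rightarrow> nat) \<Rightarrow> real) \<Rightarrow> real" where
  "riesz p y = (\<Sum>\<alpha>\<in>{\<alpha>. p \<alpha> \<noteq> 0}. p \<alpha> * y \<alpha>)"

text \<open>M_k[y] positive semidefinite (symmetric matrix indexed by N^n_k with entries y_(alpha+beta)).\<close>
definition moment_psd :: "nat \<Rightarrow> (('n::finite \<Rightarrow> nat) \<Rightarrow> real) \<Rightarrow> bool" where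
  "moment_psd k y \<longleftrightarrow> (\<forall>u :: ('n \<Rightarrow> nat) \<Rightarrow> real.
      (\<Sum>\<alpha>\<in>mindices k. \<Sum>\<beta>\<in>mindices k. u \<alpha> * u \<beta> * y (\<lambda>i. \<alpha> i + \<beta> i)) \<ge> 0)"

definition fmap :: "('m \<Rightarrow> ('n::finite) mpoly_coeffs) \<Rightarrow> real^'n \<Rightarrow> real^'m" where
  "fmap f x = (\<chi> i. peval (f i) x)"

definition feasible :: "'j set \<Rightarrow> ('j \<Rightarrow> ('n::finite) mpoly_coeffs) \<Rightarrow> (real^'n) set" where
  "feasible I c = {x. \<forall>j\<in>I. peval (c j) x \<ge> 0}"

definition upset :: "('m \<Rightarrow> ('n::finite) mpoly_coeffs) \<Rightarrow> (real^'n) set \<Rightarrow> (real^'m) set" where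
  "upset f K = {v. \<exists>x\<in>K. \<forall>i. fmap f x $ i \<le> v $ i}"

definition weakly_pareto :: "('m \<Rightarrow> ('n::finite) mpoly_coeffs) \<Rightarrow> (real^'n) set \<Rightarrow> real^'n \<Rightarrow> bool" where
  "weakly_pareto f K xs \<longleftrightarrow> xs \<in> K \<and>
     \<not> (\<exists>x\<in>K. \<forall>i. peval (f i) x < peval (f i) xs)"

definition weakly_pareto_value :: "('m \<Rightarrow> ('n::finite) mpoly_coeffs) \<Rightarrow> (real^'n) set \<Rightarrow> real^'m \<Rightarrow> bool" where
  "weakly_pareto_value f K v \<longleftrightarrow> (\<exists>xs. weakly_pareto f K xs \<and> v = fmap f xs)"

definition dmax :: "('m::finite \<Rightarrow> ('n::finite) mpoly_coeffs) \<Rightarrow> nat" where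
  "dmax f = Max (range (\<lambda>i. pdeg (f i)))"

definition d0 :: "('m::finite \<Rightarrow> ('n::finite) mpoly_coeffs) \<Rightarrow> 'j set \<Rightarrow> ('j \<Rightarrow> 'n mpoly_coeffs) \<Rightarrow> nat" where
  "d0 f I c = Max (insert ((dmax f + 1) div 2) ((\<lambda>j. (pdeg (c j) + 1) div 2) ` I))"

definition V1 :: "('m::finite \<Rightarrow> ('n::finite) mpoly_coeffs) \<Rightarrow> 'j set \<Rightarrow> ('j \<Rightarrow> 'n mpoly_coeffs) \<Rightarrow> (real^'m) set" where
  "V1 f I c = {v. \<exists>y :: ('n \<Rightarrow> nat) \<Rightarrow> real.
      y (\<lambda>_. 0) = 1 \<and> moment_psd (d0 f I c) y \<and>
      (\<forall>j\<in>I. riesz (c j) y \<ge> 0) \<and>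
      (\<forall>i. v $ i > riesz (f i) y)}"

end

theory Submission
  imports Defs
begin


lemma finite_mindices: "finite (mindices k :: ('n::finite \<Rightarrow> nat) set)"
proof -
  have "mindices k \<subseteq> Pi\<^sub>E UNIV (\<lambda>_::'n. {..k})"
  proof
    fix \<alpha> :: "'n \<Rightarrow> nat" assume "\<alpha> \<in> mindices k"
    hence "sum \<alpha> UNIV \<le> k" by (simp add: mindices_def mdeg_def)
    moreover have "\<alpha> i \<le> sum \<alpha> UNIV" for i
      by (rule member_le_sum) auto
    ultimately show "\<alpha> \<in> Pi\<^sub>E UNIV (\<lambda>_. {..k})" by (auto simp: PiE_UNIV_domain intro: le_trans)
  qed
  moreover have "finite (Pi\<^sub>E (UNIV::'n set) (\<lambda>_. {..k}))" by (rule finite_PiE) auto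
  ultimately show ?thesis by (rule finite_subset)
qed

lemma mdeg_add: "mdeg (\<lambda>i. \<alpha> i + \<beta> i) = mdeg \<alpha> + mdeg \<beta>"
  by (simp add: mdeg_def sum.distrib)

lemma mdeg_zero[simp]: "mdeg (\<lambda>_. 0) = 0" by (simp add: mdeg_def)

lemma mdeg_zero_iff: "mdeg \<alpha> = 0 \<longleftrightarrow> \<alpha> = (\<lambda>_. 0)"
  by (auto simp: mdeg_def)

lemma monom_zero[simp]: "monom_eval (\<lambda>_. 0) x = 1" by (simp add: monom_eval_def)

lemma monom_add: "monom_eval (\<lambda>i. \<alpha> i + \<beta> i) x = monom_eval \<alpha> x * monom_eval \<beta> x"
  by (simp add: monom_eval_def power_add prod.distrib)

lemma monom_scale: "monom_eval \<alpha> (c *\<^sub>R x) = c ^ mdeg \<alpha> * monom_eval \<alpha> x"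
  by (simp add: monom_eval_def mdeg_def power_mult_distrib prod.distrib power_sum)

definition unitv :: "'n \<Rightarrow> ('n \<Rightarrow> nat)" where "unitv j = (\<lambda>i. if i = j then 1 else 0)"

lemma monom_unitv: "monom_eval (unitv j) x = x $ j"
proof -
  have "(\<Prod>i\<in>UNIV. x $ i ^ unitv j i) = (\<Prod>i\<in>{j}. x $ i ^ unitv j i)"
    by (rule prod.mono_neutral_right) (auto simp: unitv_def)
  thus ?thesis by (simp add: monom_eval_def unitv_def)
qed

lemma mdeg_unitv: "mdeg (unitv j :: 'n::finite \<Rightarrow> nat) = 1"
proof -
  have "(\<Sum>i\<in>UNIV. unitv j i) = (\<Sum>i\<in>{j}. unitv j i)"
    by (rule sum.mono_neutral_right) (auto simp: unitv_def)
  thus ?thesis by (simp add: mdeg_def unitv_def)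
qed

lemma mindices_mono: "a \<le> b \<Longrightarrow> mindices a \<subseteq> mindices b"
  by (auto simp: mindices_def)

definition updc :: "real^'n \<Rightarrow> 'n \<Rightarrow> real \<Rightarrow> real^'n" where
  "updc x j t = (\<chi> i. if i = j then t else x $ i)"

lemma monom_updc:
  "monom_eval \<alpha> (updc x j t) = t ^ \<alpha> j * monom_eval (\<alpha>(j := 0)) x"
proof -
  have "monom_eval \<alpha> (updc x j t) = (\<Prod>i\<in>insert j (UNIV - {j}). (updc x j t) $ i ^ \<alpha> i)"
    by (simp add: monom_eval_def insert_absorb)
  also have "\<dots> = t ^ \<alpha> j * (\<Prod>i\<in>UNIV - {j}. x $ i ^ \<alpha> i)"
    by (subst prod.insert) (auto simp: updc_def intro!: prod.cong)
  also have "(\<Prod>i\<in>UNIV - {j}. x $ i ^ \<alpha> i) = monom_eval (\<alpha>(j := 0)) x"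
  proof -
    have "monom_eval (\<alpha>(j := 0)) x = (\<Prod>i\<in>insert j (UNIV - {j}). x $ i ^ (\<alpha>(j:=0)) i)"
      by (simp add: monom_eval_def insert_absorb)
    also have "\<dots> = (\<Prod>i\<in>UNIV - {j}. x $ i ^ \<alpha> i)"
      by (subst prod.insert) (auto intro!: prod.cong)
    finally show ?thesis by simp
  qed
  finally show ?thesis .
qed

lemma coeff_unique_aux:
  fixes S :: "'n::finite set"
  assumes "finite S"
  shows "\<forall>A (a :: ('n \<Rightarrow> nat) \<Rightarrow> real). finite A \<and> (\<forall>\<alpha>\<in>A. \<forall>i. i \<notin> S \<longrightarrow> \<alpha> i = 0)
     \<and> (\<forall>x. (\<Sum>\<alpha>\<in>A. a \<alpha> * monom_eval \<alpha> x) = 0) \<longrightarrow> (\<forall>\<alpha>\<in>A. a \<alpha> = 0)"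
  using assms
proof (induction S rule: finite_induct)
  case empty
  show ?case
  proof (intro allI impI ballI)
    fix A and a :: "('n \<Rightarrow> nat) \<Rightarrow> real" and \<alpha>
    assume H: "finite A \<and> (\<forall>\<alpha>\<in>A. \<forall>i. i \<notin> {} \<longrightarrow> \<alpha> i = 0) \<and> (\<forall>x. (\<Sum>\<alpha>\<in>A. a \<alpha> * monom_eval \<alpha> x) = 0)"
      and "\<alpha> \<in> A"
    have az: "\<beta> = (\<lambda>_. 0)" if "\<beta> \<in> A" for \<beta> using H that by (auto intro!: ext)
    hence A: "A = {\<lambda>_. 0}" using \<open>\<alpha> \<in> A\<close> by blast
    from H have "(\<Sum>\<alpha>\<in>A. a \<alpha> * monom_eval \<alpha> 0) = 0" by blast
    thus "a \<alpha> = 0" using A \<open>\<alpha> \<in> A\<close> by simp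
  qed
next
  case (insert j S)
  show ?case
  proof (intro allI impI ballI)
    fix A and a :: "('n \<Rightarrow> nat) \<Rightarrow> real" and \<alpha>
    assume H: "finite A \<and> (\<forall>\<alpha>\<in>A. \<forall>i. i \<notin> insert j S \<longrightarrow> \<alpha> i = 0) \<and> (\<forall>x. (\<Sum>\<alpha>\<in>A. a \<alpha> * monom_eval \<alpha> x) = 0)"
      and \<alpha>A: "\<alpha> \<in> A"
    have fA: "finite A" using H by blast
    define N where "N = (\<Sum>\<beta>\<in>A. \<beta> j)"
    have leN: "\<beta> j \<le> N" if "\<beta> \<in> A" for \<beta>
      unfolding N_def by (rule member_le_sum[OF that]) (use fA in auto)
    define B where "B e x = (\<Sum>\<beta>\<in>{\<beta>\<in>A. \<beta> j = e}. a \<beta> * monom_eval (\<beta>(j := 0)) x)" for e x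
    have B0: "B e x = 0" if "e \<le> N" for e x
    proof -
      have "\<forall>t. (\<Sum>e\<le>N. B e x * t ^ e) = 0"
      proof
        fix t
        have "(\<Sum>e\<le>N. B e x * t ^ e) = (\<Sum>e\<le>N. \<Sum>\<beta>\<in>{\<beta>\<in>A. \<beta> j = e}. a \<beta> * monom_eval \<beta> (updc x j t))"
          unfolding B_def sum_distrib_right by (intro sum.cong refl) (auto simp: monom_updc mult_ac)
        also have "\<dots> = (\<Sum>\<beta>\<in>A. a \<beta> * monom_eval \<beta> (updc x j t))"
          by (rule sum.group[where S=A and T="{..N}" and g="\<lambda>\<beta>. \<beta> j" and h="\<lambda>\<beta>. a \<beta> * monom_eval \<beta> (updc x j t)"])
            (use fA leN in auto)
        also have "\<dots> = 0" using H by blast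
        finally show "(\<Sum>e\<le>N. B e x * t ^ e) = 0" .
      qed
      hence "\<forall>i\<le>N. B i x = 0" by (simp only: polyfun_eq_0)
      thus ?thesis using that by blast
    qed
    define e where "e = \<alpha> j"
    define A' where "A' = (\<lambda>\<beta>. \<beta>(j := 0)) ` {\<beta>\<in>A. \<beta> j = e}"
    have inj: "inj_on (\<lambda>\<beta>. \<beta>(j := 0)) {\<beta>\<in>A. \<beta> j = e}"
    proof (rule inj_onI)
      fix \<beta> \<gamma> assume "\<beta> \<in> {\<beta>\<in>A. \<beta> j = e}" "\<gamma> \<in> {\<beta>\<in>A. \<beta> j = e}" "\<beta>(j := 0) = \<gamma>(j := 0)"
      thus "\<beta> = \<gamma>"
      proof (intro ext)
        fix i assume p: "\<beta> \<in> {\<beta>\<in>A. \<beta> j = e}" "\<gamma> \<in> {\<beta>\<in>A. \<beta> j = e}" "\<beta>(j := 0) = \<gamma>(j := 0)"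
        show "\<beta> i = \<gamma> i"
        proof (cases "i = j")
          case True thus ?thesis using p by simp
        next
          case False thus ?thesis using fun_cong[OF p(3), of i] by simp
        qed
      qed
    qed
    have sumA': "(\<Sum>\<gamma>\<in>A'. a (\<gamma>(j := e)) * monom_eval \<gamma> x) = B e x" for x
      unfolding A'_def B_def
      by (subst sum.reindex[OF inj]) (auto intro!: sum.cong simp: fun_upd_idem)
    have fin': "finite A'" unfolding A'_def using fA by auto
    have varsA: "\<forall>\<alpha>\<in>A. \<forall>i. i \<notin> insert j S \<longrightarrow> \<alpha> i = 0" using H by blast
    have vars': "\<forall>\<gamma>\<in>A'. \<forall>i. i \<notin> S \<longrightarrow> \<gamma> i = 0"
      using varsA by (auto simp: A'_def)
    have eN: "e \<le> N" using leN \<alpha>A e_def by simp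
    have zero': "\<forall>x. (\<Sum>\<gamma>\<in>A'. a (\<gamma>(j := e)) * monom_eval \<gamma> x) = 0"
      using sumA' B0[OF eN] by simp
    have "\<forall>\<gamma>\<in>A'. a (\<gamma>(j := e)) = 0"
    proof (intro ballI)
      fix \<gamma> assume "\<gamma> \<in> A'"
      show "a (\<gamma>(j := e)) = 0"
        by (rule insert.IH[rule_format, OF conjI[OF fin' conjI[OF vars' zero']] \<open>\<gamma> \<in> A'\<close>])
    qed
    moreover have "\<alpha>(j := 0) \<in> A'" unfolding A'_def e_def using \<alpha>A by auto
    ultimately have "a ((\<alpha>(j := 0))(j := e)) = 0" by blast
    moreover have "(\<alpha>(j := 0))(j := e) = \<alpha>" by (simp add: e_def)
    ultimately show "a \<alpha> = 0" by simp
  qed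
qed

lemma coeff_unique:
  fixes A :: "('n::finite \<Rightarrow> nat) set"
  assumes "finite A" "\<And>x. (\<Sum>\<alpha>\<in>A. a \<alpha> * monom_eval \<alpha> x) = 0" "\<alpha> \<in> A"
  shows "a \<alpha> = 0"
  using coeff_unique_aux[of "UNIV::'n set"] assms by auto



abbreviation mon where "mon \<equiv> monom_eval"
abbreviation MI where "MI \<equiv> mindices"

definition Pk :: "nat \<Rightarrow> (real^'n::finite \<Rightarrow> real) set" where
  "Pk k = {g. \<exists>a. g = (\<lambda>x. \<Sum>\<alpha>\<in>MI k. a \<alpha> * mon \<alpha> x)}"

lemma Pk_I: "g = (\<lambda>x. \<Sum>\<alpha>\<in>MI k. a \<alpha> * mon \<alpha> x) \<Longrightarrow> g \<in> Pk k"
  unfolding Pk_def by blast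

lemma comb_eq:
  assumes "finite F" "\<gamma> ` F \<subseteq> MI k"
  shows "(\<lambda>x. \<Sum>i\<in>F. c i * mon (\<gamma> i) x) =
         (\<lambda>x. \<Sum>\<alpha>\<in>MI k. (\<Sum>i\<in>{i\<in>F. \<gamma> i = \<alpha>}. c i) * mon \<alpha> x)"
proof
  fix x
  have "(\<Sum>\<alpha>\<in>MI k. (\<Sum>i\<in>{i\<in>F. \<gamma> i = \<alpha>}. c i) * mon \<alpha> x)
      = (\<Sum>\<alpha>\<in>MI k. \<Sum>i\<in>{i\<in>F. \<gamma> i = \<alpha>}. c i * mon (\<gamma> i) x)"
    unfolding sum_distrib_right by (intro sum.cong refl) auto
  also have "\<dots> = (\<Sum>i\<in>F. c i * mon (\<gamma> i) x)"
    by (rule sum.group[where S=F and T="MI k" and g=\<gamma> and h="\<lambda>i. c i * mon (\<gamma> i) x"])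
      (use assms finite_mindices in auto)
  finally show "(\<Sum>i\<in>F. c i * mon (\<gamma> i) x) = (\<Sum>\<alpha>\<in>MI k. (\<Sum>i\<in>{i\<in>F. \<gamma> i = \<alpha>}. c i) * mon \<alpha> x)" ..
qed

lemma Pk_comb:
  assumes "finite F" "\<gamma> ` F \<subseteq> MI k"
  shows "(\<lambda>x. \<Sum>i\<in>F. c i * mon (\<gamma> i) x) \<in> Pk k"
  by (rule Pk_I[OF comb_eq[OF assms, of c]])

definition Lf :: "nat \<Rightarrow> (('n::finite \<Rightarrow> nat) \<Rightarrow> real) \<Rightarrow> (real^'n \<Rightarrow> real) \<Rightarrow> real" where
  "Lf k y g = (\<Sum>\<alpha>\<in>MI k. (SOME a. g = (\<lambda>x. \<Sum>\<alpha>\<in>MI k. a \<alpha> * mon \<alpha> x)) \<alpha> * y \<alpha>)"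

lemma rep_unique:
  assumes "(\<lambda>x. \<Sum>\<alpha>\<in>MI k. a \<alpha> * mon \<alpha> x) = (\<lambda>x. \<Sum>\<alpha>\<in>MI k. b \<alpha> * mon \<alpha> x)"
    and "\<alpha> \<in> MI k"
  shows "a \<alpha> = b \<alpha>"
proof -
  have "(\<Sum>\<alpha>\<in>MI k. (a \<alpha> - b \<alpha>) * mon \<alpha> x) = 0" for x
    using fun_cong[OF assms(1), of x] by (simp add: left_diff_distrib sum_subtractf)
  from coeff_unique[OF finite_mindices this assms(2)] show ?thesis by simp
qed

lemma Lf_rep: "Lf k y (\<lambda>x. \<Sum>\<alpha>\<in>MI k. a \<alpha> * mon \<alpha> x) = (\<Sum>\<alpha>\<in>MI k. a \<alpha> * y \<alpha>)"
proof -
  let ?g = "\<lambda>x. \<Sum>\<alpha>\<in>MI k. a \<alpha> * mon \<alpha> x"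
  let ?b = "SOME b. ?g = (\<lambda>x. \<Sum>\<alpha>\<in>MI k. b \<alpha> * mon \<alpha> x)"
  have eqb: "?g = (\<lambda>x. \<Sum>\<alpha>\<in>MI k. ?b \<alpha> * mon \<alpha> x)"
    by (rule someI[of "\<lambda>b. ?g = (\<lambda>x. \<Sum>\<alpha>\<in>MI k. b \<alpha> * mon \<alpha> x)" a]) (rule refl)
  have "?b \<alpha> = a \<alpha>" if "\<alpha> \<in> MI k" for \<alpha>
    using rep_unique[OF eqb that] by simp
  thus ?thesis unfolding Lf_def by (intro sum.cong refl) simp
qed

lemma Lf_comb:
  assumes "finite F" "\<gamma> ` F \<subseteq> MI k"
  shows "Lf k y (\<lambda>x. \<Sum>i\<in>F. c i * mon (\<gamma> i) x) = (\<Sum>i\<in>F. c i * y (\<gamma> i))"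
proof -
  have "Lf k y (\<lambda>x. \<Sum>i\<in>F. c i * mon (\<gamma> i) x) = (\<Sum>\<alpha>\<in>MI k. (\<Sum>i\<in>{i\<in>F. \<gamma> i = \<alpha>}. c i) * y \<alpha>)"
    unfolding comb_eq[OF assms] Lf_rep ..
  also have "\<dots> = (\<Sum>\<alpha>\<in>MI k. \<Sum>i\<in>{i\<in>F. \<gamma> i = \<alpha>}. c i * y (\<gamma> i))"
    unfolding sum_distrib_right by (intro sum.cong refl) auto
  also have "\<dots> = (\<Sum>i\<in>F. c i * y (\<gamma> i))"
    by (rule sum.group[where S=F and T="MI k" and g=\<gamma> and h="\<lambda>i. c i * y (\<gamma> i)"])
      (use assms finite_mindices in auto)
  finally show ?thesis .
qed

lemma Pk_add: "g \<in> Pk k \<Longrightarrow> h \<in> Pk k \<Longrightarrow> (\<lambda>x. g x + h x) \<in> Pk k"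
proof -
  assume "g \<in> Pk k" "h \<in> Pk k"
  then obtain a b where g: "g = (\<lambda>x. \<Sum>\<alpha>\<in>MI k. a \<alpha> * mon \<alpha> x)" and h: "h = (\<lambda>x. \<Sum>\<alpha>\<in>MI k. b \<alpha> * mon \<alpha> x)"
    unfolding Pk_def by blast
  have "(\<lambda>x. g x + h x) = (\<lambda>x. \<Sum>\<alpha>\<in>MI k. (a \<alpha> + b \<alpha>) * mon \<alpha> x)"
    unfolding g h by (simp add: sum.distrib distrib_right)
  thus ?thesis by (rule Pk_I)
qed

lemma Lf_add: assumes "g \<in> Pk k" "h \<in> Pk k"
  shows "Lf k y (\<lambda>x. g x + h x) = Lf k y g + Lf k y h"
proof -
  obtain a b where g: "g = (\<lambda>x. \<Sum>\<alpha>\<in>MI k. a \<alpha> * mon \<alpha> x)" and h: "h = (\<lambda>x. \<Sum>\<alpha>\<in>MI k. b \<alpha> * mon \<alpha> x)"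
    using assms unfolding Pk_def by blast
  have eq: "(\<lambda>x. g x + h x) = (\<lambda>x. \<Sum>\<alpha>\<in>MI k. (a \<alpha> + b \<alpha>) * mon \<alpha> x)"
    unfolding g h by (simp add: sum.distrib distrib_right)
  have "Lf k y (\<lambda>x. g x + h x) = (\<Sum>\<alpha>\<in>MI k. (a \<alpha> + b \<alpha>) * y \<alpha>)" by (simp only: eq Lf_rep)
  moreover have "Lf k y g = (\<Sum>\<alpha>\<in>MI k. a \<alpha> * y \<alpha>)" by (simp only: g Lf_rep)
  moreover have "Lf k y h = (\<Sum>\<alpha>\<in>MI k. b \<alpha> * y \<alpha>)" by (simp only: h Lf_rep)
  ultimately show ?thesis by (simp add: sum.distrib distrib_right)
qed

lemma Pk_scale: "g \<in> Pk k \<Longrightarrow> (\<lambda>x. r * g x) \<in> Pk k"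
proof -
  assume "g \<in> Pk k"
  then obtain a where g: "g = (\<lambda>x. \<Sum>\<alpha>\<in>MI k. a \<alpha> * mon \<alpha> x)"
    unfolding Pk_def by blast
  have "(\<lambda>x. r * g x) = (\<lambda>x. \<Sum>\<alpha>\<in>MI k. (r * a \<alpha>) * mon \<alpha> x)"
    unfolding g by (simp add: sum_distrib_left mult.assoc)
  thus ?thesis by (rule Pk_I)
qed

lemma Lf_scale: assumes "g \<in> Pk k"
  shows "Lf k y (\<lambda>x. r * g x) = r * Lf k y g"
proof -
  obtain a where g: "g = (\<lambda>x. \<Sum>\<alpha>\<in>MI k. a \<alpha> * mon \<alpha> x)"
    using assms unfolding Pk_def by blast
  have eq: "(\<lambda>x. r * g x) = (\<lambda>x. \<Sum>\<alpha>\<in>MI k. (r * a \<alpha>) * mon \<alpha> x)"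
    unfolding g by (simp add: sum_distrib_left mult.assoc)
  have "Lf k y (\<lambda>x. r * g x) = (\<Sum>\<alpha>\<in>MI k. (r * a \<alpha>) * y \<alpha>)" by (simp only: eq Lf_rep)
  moreover have "Lf k y g = (\<Sum>\<alpha>\<in>MI k. a \<alpha> * y \<alpha>)" by (simp only: g Lf_rep)
  ultimately show ?thesis by (simp add: sum_distrib_left mult.assoc)
qed

lemma Pk_sum: "finite S \<Longrightarrow> (\<And>i. i \<in> S \<Longrightarrow> g i \<in> Pk k) \<Longrightarrow> (\<lambda>x. \<Sum>i\<in>S. g i x) \<in> Pk k"
proof (induction S rule: finite_induct)
  case empty
  have "(\<lambda>x. \<Sum>i\<in>{}. g i x) = (\<lambda>x. \<Sum>\<alpha>\<in>MI k. 0 * mon \<alpha> x)" by simp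
  thus ?case by (rule Pk_I)
next
  case (insert a F)
  thus ?case using Pk_add[of "g a" k "\<lambda>x. \<Sum>i\<in>F. g i x"] by simp
qed

lemma Lf_sum: "finite S \<Longrightarrow> (\<And>i. i \<in> S \<Longrightarrow> g i \<in> Pk k) \<Longrightarrow>
   Lf k y (\<lambda>x. \<Sum>i\<in>S. g i x) = (\<Sum>i\<in>S. Lf k y (g i))"
proof (induction S rule: finite_induct)
  case empty
  have "(\<lambda>x. \<Sum>i\<in>{}. g i x) = (\<lambda>x. \<Sum>\<alpha>\<in>MI k. 0 * mon \<alpha> x)" by simp
  thus ?case using Lf_rep[of k y "\<lambda>_. 0"] by simp
next
  case (insert a F)
  have "Lf k y (\<lambda>x. \<Sum>i\<in>insert a F. g i x) = Lf k y (\<lambda>x. g a x + (\<Sum>i\<in>F. g i x))"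
    using insert.hyps by simp
  also have "\<dots> = Lf k y (g a) + Lf k y (\<lambda>x. \<Sum>i\<in>F. g i x)"
    by (rule Lf_add) (use insert Pk_sum[OF insert.hyps(1), of g k] in auto)
  finally show ?case using insert by simp
qed

lemma zero_in_MI[simp]: "(\<lambda>_. 0) \<in> MI k" by (simp add: mindices_def)

lemma Pk_const: "(\<lambda>x. r) \<in> Pk k"
  using Pk_comb[of "{()}" "\<lambda>_. \<lambda>_. 0" k "\<lambda>_. r"] by simp

lemma Lf_const: "Lf k y (\<lambda>x. r) = r * y (\<lambda>_. 0)"
  using Lf_comb[of "{()}" "\<lambda>_. \<lambda>_. 0" k y "\<lambda>_. r"] by simp

lemma unitv_MI: "1 \<le> k \<Longrightarrow> unitv j \<in> MI k" by (simp add: mindices_def mdeg_unitv)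

lemma Pk_coord: "1 \<le> k \<Longrightarrow> (\<lambda>x. x $ j) \<in> Pk k"
  using Pk_comb[of "{()}" "\<lambda>_. unitv j" k "\<lambda>_. 1"] by (simp add: unitv_MI monom_unitv)

lemma Lf_coord: "1 \<le> k \<Longrightarrow> Lf k y (\<lambda>x. x $ j) = y (unitv j)"
  using Lf_comb[of "{()}" "\<lambda>_. unitv j" k y "\<lambda>_. 1"] by (simp add: unitv_MI monom_unitv)

lemma Pk_mono: "a \<le> b \<Longrightarrow> g \<in> Pk a \<Longrightarrow> g \<in> Pk b"
proof -
  assume "a \<le> b" "g \<in> Pk a"
  then obtain c where g: "g = (\<lambda>x. \<Sum>\<alpha>\<in>MI a. c \<alpha> * mon \<alpha> x)" unfolding Pk_def by blast
  show "g \<in> Pk b" unfolding g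
    by (rule Pk_comb[where \<gamma>="\<lambda>\<alpha>. \<alpha>", simplified]) (use finite_mindices mindices_mono[OF \<open>a \<le> b\<close>] in auto)
qed

lemma MI_add: "\<alpha> \<in> MI a \<Longrightarrow> \<beta> \<in> MI b \<Longrightarrow> (\<lambda>i. \<alpha> i + \<beta> i) \<in> MI (a + b)"
  by (simp add: mindices_def mdeg_add)

lemma MI_add2: "\<alpha> \<in> MI d \<Longrightarrow> \<beta> \<in> MI d \<Longrightarrow> (\<lambda>i. \<alpha> i + \<beta> i) \<in> MI (2 * d)"
  by (simp add: mindices_def mdeg_add)

lemma Pk_mult:
  assumes "g \<in> Pk a" "h \<in> Pk b"
  shows "(\<lambda>x. g x * h x) \<in> Pk (a + b)"
proof -
  obtain c d where g: "g = (\<lambda>x. \<Sum>\<alpha>\<in>MI a. c \<alpha> * mon \<alpha> x)" and h: "h = (\<lambda>x. \<Sum>\<alpha>\<in>MI b. d \<alpha> * mon \<alpha> x)"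
    using assms unfolding Pk_def by blast
  have "(\<lambda>x. g x * h x) = (\<lambda>x. \<Sum>q\<in>MI a \<times> MI b. (c (fst q) * d (snd q)) * mon (\<lambda>i. fst q i + snd q i) x)"
    unfolding g h sum_product sum.cartesian_product by (simp add: monom_add mult_ac case_prod_beta)
  also have "\<dots> \<in> Pk (a + b)"
    by (rule Pk_comb) (auto simp: finite_mindices intro: MI_add)
  finally show ?thesis .
qed

lemma moment_pos:
  assumes "moment_psd d y" "s \<in> Pk d"
  shows "Lf (2 * d) y (\<lambda>x. s x * s x) \<ge> 0"
proof -
  obtain c where s: "s = (\<lambda>x. \<Sum>\<alpha>\<in>MI d. c \<alpha> * mon \<alpha> x)"
    using assms unfolding Pk_def by blast
  have eq: "(\<lambda>x. s x * s x) = (\<lambda>x. \<Sum>q\<in>MI d \<times> MI d. (c (fst q) * c (snd q)) * mon (\<lambda>i. fst q i + snd q i) x)"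
    unfolding s sum_product sum.cartesian_product by (simp add: monom_add mult_ac case_prod_beta)
  have "Lf (2 * d) y (\<lambda>x. s x * s x) = (\<Sum>q\<in>MI d \<times> MI d. (c (fst q) * c (snd q)) * y (\<lambda>i. fst q i + snd q i))"
    unfolding eq by (subst Lf_comb) (auto simp: finite_mindices intro: MI_add2)
  also have "\<dots> = (\<Sum>\<alpha>\<in>MI d. \<Sum>\<beta>\<in>MI d. c \<alpha> * c \<beta> * y (\<lambda>i. \<alpha> i + \<beta> i))"
    by (simp add: sum.cartesian_product case_prod_beta)
  also have "\<dots> \<ge> 0" using assms(1) unfolding moment_psd_def by blast
  finally show ?thesis .
qed

lemma supp_pdeg: "is_poly p \<Longrightarrow> {\<alpha>. p \<alpha> \<noteq> 0} \<subseteq> MI (pdeg p)"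
  unfolding is_poly_def pdeg_def mindices_def by (auto intro!: Max_ge)

lemma peval_rep:
  assumes "is_poly p" "{\<alpha>. p \<alpha> \<noteq> 0} \<subseteq> MI k"
  shows "peval p = (\<lambda>x. \<Sum>\<alpha>\<in>MI k. p \<alpha> * mon \<alpha> x)"
proof
  fix x show "peval p x = (\<Sum>\<alpha>\<in>MI k. p \<alpha> * mon \<alpha> x)"
    unfolding peval_def by (rule sum.mono_neutral_left) (use assms finite_mindices in auto)
qed

lemma riesz_rep:
  assumes "is_poly p" "{\<alpha>. p \<alpha> \<noteq> 0} \<subseteq> MI k"
  shows "riesz p y = (\<Sum>\<alpha>\<in>MI k. p \<alpha> * y \<alpha>)"
  unfolding riesz_def by (rule sum.mono_neutral_left) (use assms finite_mindices in auto)

lemma peval_Pk: "is_poly p \<Longrightarrow> {\<alpha>. p \<alpha> \<noteq> 0} \<subseteq> MI k \<Longrightarrow> peval p \<in> Pk k"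
  unfolding Pk_def using peval_rep by blast

lemma Lf_peval: "is_poly p \<Longrightarrow> {\<alpha>. p \<alpha> \<noteq> 0} \<subseteq> MI k \<Longrightarrow> Lf k y (peval p) = riesz p y"
  by (simp add: peval_rep riesz_rep Lf_rep)



definition Tk :: "nat \<Rightarrow> (real \<Rightarrow> real^'n::finite \<Rightarrow> real) set" where
  "Tk K = {G. \<exists>F c. finite F \<and> snd ` F \<subseteq> MI K \<and> G = (\<lambda>t x. \<Sum>q\<in>F. c q * t ^ fst q * mon (snd q) x)}"

lemma Tk_I:
  "finite F \<Longrightarrow> snd ` F \<subseteq> MI K \<Longrightarrow> G = (\<lambda>t x. \<Sum>q\<in>F. c q * t ^ fst q * mon (snd q) x) \<Longrightarrow> G \<in> Tk K"
  unfolding Tk_def by blast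

lemma Tk_comb:
  assumes "finite F" "\<gamma> ` F \<subseteq> MI K"
  shows "(\<lambda>t x. \<Sum>i\<in>F. c i * t ^ e i * mon (\<gamma> i) x) \<in> Tk K"
proof -
  let ?g = "\<lambda>i. (e i, \<gamma> i)"
  let ?T = "?g ` F"
  let ?c = "\<lambda>q. \<Sum>i\<in>{i\<in>F. ?g i = q}. c i"
  have "(\<lambda>t x. \<Sum>i\<in>F. c i * t ^ e i * mon (\<gamma> i) x) = (\<lambda>t x. \<Sum>q\<in>?T. ?c q * t ^ fst q * mon (snd q) x)"
  proof (intro ext)
    fix t x
    have "(\<Sum>q\<in>?T. ?c q * t ^ fst q * mon (snd q) x) = (\<Sum>q\<in>?T. \<Sum>i\<in>{i\<in>F. ?g i = q}. c i * t ^ e i * mon (\<gamma> i) x)"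
      unfolding sum_distrib_right by (intro sum.cong refl) auto
    also have "\<dots> = (\<Sum>i\<in>F. c i * t ^ e i * mon (\<gamma> i) x)"
      by (rule sum.group[where S=F and T="?T" and g="?g" and h="\<lambda>i. c i * t ^ e i * mon (\<gamma> i) x"])
        (use assms in auto)
    finally show "(\<Sum>i\<in>F. c i * t ^ e i * mon (\<gamma> i) x) = (\<Sum>q\<in>?T. ?c q * t ^ fst q * mon (snd q) x)" ..
  qed
  moreover have "finite ?T" "snd ` ?T \<subseteq> MI K" using assms by auto
  ultimately show ?thesis by (intro Tk_I) auto
qed

lemma Tk_E:
  assumes "G \<in> Tk K"
  obtains F c where "finite F" "snd ` F \<subseteq> MI K" "G = (\<lambda>t x. \<Sum>q\<in>F. c q * t ^ fst q * mon (snd q) x)"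
  using assms unfolding Tk_def by blast

lemma Tk_at: "G \<in> Tk K \<Longrightarrow> G t \<in> Pk K"
proof -
  assume "G \<in> Tk K"
  then obtain F c where F: "finite F" "snd ` F \<subseteq> MI K" and G: "G = (\<lambda>t x. \<Sum>q\<in>F. c q * t ^ fst q * mon (snd q) x)"
    by (rule Tk_E)
  show "G t \<in> Pk K" unfolding G using Pk_comb[OF F, of "\<lambda>q. c q * t ^ fst q"] by simp
qed

lemma Tk_mono: "a \<le> b \<Longrightarrow> G \<in> Tk a \<Longrightarrow> G \<in> Tk b"
proof -
  assume ab: "a \<le> b" and G0: "G \<in> Tk a"
  from G0 obtain F c where F: "finite F" "snd ` F \<subseteq> MI a" and G: "G = (\<lambda>t x. \<Sum>q\<in>F. c q * t ^ fst q * mon (snd q) x)"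
    by (rule Tk_E)
  show ?thesis by (rule Tk_I[OF F(1) _ G]) (use F(2) mindices_mono[OF ab] in blast)
qed

lemma Tk_const: "(\<lambda>t x. r) \<in> Tk K"
  using Tk_comb[of "{()}" "\<lambda>_. \<lambda>_. 0" K "\<lambda>_. r" "\<lambda>_. 0"] by simp

lemma Tk_add:
  assumes "G \<in> Tk K" "H \<in> Tk K"
  shows "(\<lambda>t x. G t x + H t x) \<in> Tk K"
proof -
  obtain F c where F: "finite F" "snd ` F \<subseteq> MI K" and G: "G = (\<lambda>t x. \<Sum>q\<in>F. c q * t ^ fst q * mon (snd q) x)"
    using assms(1) by (rule Tk_E)
  obtain F' c' where F': "finite F'" "snd ` F' \<subseteq> MI K" and H: "H = (\<lambda>t x. \<Sum>q\<in>F'. c' q * t ^ fst q * mon (snd q) x)"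
    using assms(2) by (rule Tk_E)
  have "(\<lambda>t x. G t x + H t x) = (\<lambda>t x. \<Sum>i\<in>F <+> F'. case_sum c c' i * t ^ case_sum fst fst i * mon (case_sum snd snd i) x)"
    unfolding G H using F F' by (simp add: sum.Plus o_def)
  also have "\<dots> \<in> Tk K"
    by (rule Tk_comb) (use F F' in auto)
  finally show ?thesis .
qed

lemma Tk_mult:
  assumes "G \<in> Tk a" "H \<in> Tk b"
  shows "(\<lambda>t x. G t x * H t x) \<in> Tk (a + b)"
proof -
  obtain F c where F: "finite F" "snd ` F \<subseteq> MI a" and G: "G = (\<lambda>t x. \<Sum>q\<in>F. c q * t ^ fst q * mon (snd q) x)"
    using assms(1) by (rule Tk_E)
  obtain F' c' where F': "finite F'" "snd ` F' \<subseteq> MI b" and H: "H = (\<lambda>t x. \<Sum>q\<in>F'. c' q * t ^ fst q * mon (snd q) x)"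
    using assms(2) by (rule Tk_E)
  have "(\<lambda>t x. G t x * H t x) = (\<lambda>t x. \<Sum>p\<in>F \<times> F'. (c (fst p) * c' (snd p)) * t ^ (fst (fst p) + fst (snd p))
            * mon (\<lambda>i. snd (fst p) i + snd (snd p) i) x)"
    unfolding G H sum_product sum.cartesian_product
    by (simp add: monom_add power_add mult_ac case_prod_beta)
  also have "\<dots> \<in> Tk (a + b)"
    by (rule Tk_comb) (use F F' in \<open>auto intro!: MI_add\<close>)
  finally show ?thesis .
qed

lemma Tk_scale: "G \<in> Tk K \<Longrightarrow> (\<lambda>t x. r * G t x) \<in> Tk K"
  using Tk_mult[OF Tk_const[of r 0]] by simp

lemma Tk_sum: "finite S \<Longrightarrow> (\<And>i. i \<in> S \<Longrightarrow> G i \<in> Tk K) \<Longrightarrow> (\<lambda>t x. \<Sum>i\<in>S. G i t x) \<in> Tk K"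
proof (induction S rule: finite_induct)
  case empty thus ?case using Tk_const[of 0 K] by simp
next
  case (insert a F)
  thus ?case using Tk_add[of "G a" K "\<lambda>t x. \<Sum>i\<in>F. G i t x"] by simp
qed

lemma Tk_pow: "A \<in> Tk 1 \<Longrightarrow> (\<lambda>t x. (A t x) ^ n) \<in> Tk n"
proof (induction n)
  case 0 thus ?case using Tk_const[of 1 0] by simp
next
  case (Suc n)
  thus ?case using Tk_mult[of A 1 "\<lambda>t x. (A t x) ^ n" n] by simp
qed

lemma Tk_prod: "finite S \<Longrightarrow> (\<And>i. i \<in> S \<Longrightarrow> A i \<in> Tk 1) \<Longrightarrow>
   (\<lambda>t x. \<Prod>i\<in>S. (A i t x) ^ \<alpha> i) \<in> Tk (\<Sum>i\<in>S. \<alpha> i)"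
proof (induction S rule: finite_induct)
  case empty thus ?case using Tk_const[of 1 0] by simp
next
  case (insert a F)
  have "(\<lambda>t x. (A a t x) ^ \<alpha> a * (\<Prod>i\<in>F. (A i t x) ^ \<alpha> i)) \<in> Tk (\<alpha> a + (\<Sum>i\<in>F. \<alpha> i))"
    by (rule Tk_mult) (use insert Tk_pow in auto)
  thus ?case using insert.hyps by simp
qed

lemma Tk_affine: "(\<lambda>t x. u $ i + t * (x $ i - u $ i)) \<in> Tk 1"
proof -
  let ?c = "\<lambda>k::nat. if k = 0 then u $ i else if k = 1 then 1 else - u $ i"
  let ?e = "\<lambda>k::nat. if k = 0 then 0 else 1::nat"
  let ?g = "\<lambda>k::nat. if k = 1 then unitv i else (\<lambda>_. 0)"
  have "(\<lambda>t x. \<Sum>k\<in>{0,1,2}. ?c k * t ^ ?e k * mon (?g k) x) \<in> Tk 1"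
    by (rule Tk_comb) (auto simp: unitv_MI)
  moreover have "(\<lambda>t x. \<Sum>k\<in>{0,1,2}. ?c k * t ^ ?e k * mon (?g k) x) = (\<lambda>t x. u $ i + t * (x $ i - u $ i))"
    by (simp add: monom_unitv algebra_simps)
  ultimately show ?thesis by simp
qed

lemma Pk_compose:
  fixes g :: "real^'n::finite \<Rightarrow> real"
  assumes "g \<in> Pk K"
  shows "(\<lambda>t x. g (u + t *\<^sub>R (x - u))) \<in> Tk K"
proof -
  obtain a where g: "g = (\<lambda>x. \<Sum>\<alpha>\<in>MI K. a \<alpha> * mon \<alpha> x)" using assms unfolding Pk_def by blast
  have "(\<lambda>t x. g (u + t *\<^sub>R (x - u))) =
        (\<lambda>t x. \<Sum>\<alpha>\<in>MI K. a \<alpha> * (\<Prod>i\<in>UNIV. (u $ i + t * (x $ i - u $ i)) ^ \<alpha> i))"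
    unfolding g monom_eval_def by simp
  also have "\<dots> \<in> Tk K"
  proof (rule Tk_sum[OF finite_mindices])
    fix \<alpha> :: "'n \<Rightarrow> nat" assume "\<alpha> \<in> MI K"
    hence "(\<lambda>t x. \<Prod>i\<in>UNIV. (u $ i + t * (x $ i - u $ i)) ^ \<alpha> i) \<in> Tk K"
      using Tk_prod[of UNIV "\<lambda>i t x. u $ i + t * (x $ i - u $ i)" \<alpha>] Tk_affine
      by (auto simp: mindices_def mdeg_def intro: Tk_mono)
    thus "(\<lambda>t x. a \<alpha> * (\<Prod>i\<in>UNIV. (u $ i + t * (x $ i - u $ i)) ^ \<alpha> i)) \<in> Tk K"
      by (rule Tk_scale)
  qed
  finally show ?thesis .
qed

lemma DERIV_tsum:
  "((\<lambda>t. \<Sum>q\<in>F. c q * t ^ e q * b q) has_real_derivative (\<Sum>q\<in>F. (c q * real (e q)) * t ^ (e q - 1) * b q)) (at t)"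
  by (rule DERIV_sum) (auto intro!: derivative_eq_intros)

lemma Lf_Tk:
  assumes "finite F" "snd ` F \<subseteq> MI K"
  shows "Lf K y (\<lambda>x. \<Sum>q\<in>F. c q * t ^ e q * mon (snd q) x) = (\<Sum>q\<in>F. c q * t ^ e q * y (snd q))"
  using Lf_comb[OF assms, of y "\<lambda>q. c q * t ^ e q"] by simp



lemma upd_suc_eq: "\<alpha>(i := \<alpha> i + 1) = (\<lambda>l. \<alpha> l + unitv i l)"
  by (auto simp: unitv_def)

lemma mdeg_upd_suc: "mdeg (\<alpha>(i := \<alpha> i + 1)) = mdeg \<alpha> + 1"
  unfolding upd_suc_eq mdeg_add mdeg_unitv ..

lemma supp_pdiff_sub: "{\<beta>. pdiff i p \<beta> \<noteq> 0} \<subseteq> (\<lambda>\<alpha>. \<alpha>(i := \<alpha> i - 1)) ` {\<alpha>. p \<alpha> \<noteq> 0}"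
proof
  fix \<beta> assume "\<beta> \<in> {\<beta>. pdiff i p \<beta> \<noteq> 0}"
  hence "p (\<beta>(i := \<beta> i + 1)) \<noteq> 0" by (simp add: pdiff_def)
  moreover have "\<beta> = (\<beta>(i := \<beta> i + 1))(i := (\<beta>(i := \<beta> i + 1)) i - 1)" by simp
  ultimately show "\<beta> \<in> (\<lambda>\<alpha>. \<alpha>(i := \<alpha> i - 1)) ` {\<alpha>. p \<alpha> \<noteq> 0}" by blast
qed

lemma is_poly_pdiff: "is_poly p \<Longrightarrow> is_poly (pdiff i p)"
proof -
  assume "is_poly p"
  hence "finite {\<alpha>. p \<alpha> \<noteq> 0}" by (simp add: is_poly_def)
  hence "finite ((\<lambda>\<alpha>. \<alpha>(i := \<alpha> i - 1)) ` {\<alpha>. p \<alpha> \<noteq> 0})" by simp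
  thus ?thesis unfolding is_poly_def by (rule finite_subset[OF supp_pdiff_sub])
qed

lemma supp_pdiff:
  assumes "{\<alpha>. p \<alpha> \<noteq> 0} \<subseteq> MI K"
  shows "{\<beta>. pdiff i p \<beta> \<noteq> 0} \<subseteq> MI (K - 1)"
proof
  fix \<beta> assume "\<beta> \<in> {\<beta>. pdiff i p \<beta> \<noteq> 0}"
  hence "p (\<beta>(i := \<beta> i + 1)) \<noteq> 0" by (simp add: pdiff_def)
  hence "mdeg (\<beta>(i := \<beta> i + 1)) \<le> K" using assms by (auto simp: mindices_def)
  thus "\<beta> \<in> MI (K - 1)" unfolding mdeg_upd_suc mindices_def by simp
qed

lemma mon_split:
  "mon \<beta> z = z $ j ^ \<beta> j * (\<Prod>l\<in>UNIV - {j}. z $ l ^ \<beta> l)"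
proof -
  have "mon \<beta> z = (\<Prod>l\<in>insert j (UNIV - {j}). z $ l ^ \<beta> l)"
    by (simp add: monom_eval_def insert_absorb)
  also have "\<dots> = z $ j ^ \<beta> j * (\<Prod>l\<in>UNIV - {j}. z $ l ^ \<beta> l)"
    by (subst prod.insert) auto
  finally show ?thesis .
qed

lemma DERIV_mon:
  "((\<lambda>t. mon \<alpha> (a + t *\<^sub>R w)) has_real_derivative
     (\<Sum>j\<in>UNIV. w $ j * real (\<alpha> j) * mon (\<alpha>(j := \<alpha> j - 1)) (a + t *\<^sub>R w))) (at t)"
proof -
  let ?z = "a + t *\<^sub>R w"
  have d: "((\<lambda>t. (a + t *\<^sub>R w) $ l ^ \<alpha> l) has_real_derivative
            real (\<alpha> l) * (?z $ l) ^ (\<alpha> l - 1) * w $ l) (at t)" for l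
    by (auto intro!: derivative_eq_intros)
  have "((\<lambda>t. \<Prod>l\<in>UNIV. (a + t *\<^sub>R w) $ l ^ \<alpha> l) has_real_derivative
      (\<Sum>l\<in>UNIV. (real (\<alpha> l) * (?z $ l) ^ (\<alpha> l - 1) * w $ l) * (\<Prod>k\<in>UNIV - {l}. ?z $ k ^ \<alpha> k))) (at t)"
    by (rule has_field_derivative_prod) (rule d)
  moreover have "(\<Sum>l\<in>UNIV. (real (\<alpha> l) * (?z $ l) ^ (\<alpha> l - 1) * w $ l) * (\<Prod>k\<in>UNIV - {l}. ?z $ k ^ \<alpha> k))
      = (\<Sum>j\<in>UNIV. w $ j * real (\<alpha> j) * mon (\<alpha>(j := \<alpha> j - 1)) ?z)"
  proof (intro sum.cong refl)
    fix l
    have "mon (\<alpha>(l := \<alpha> l - 1)) ?z = ?z $ l ^ (\<alpha> l - 1) * (\<Prod>k\<in>UNIV - {l}. ?z $ k ^ \<alpha> k)"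
      by (subst mon_split[where j=l]) (auto intro!: prod.cong)
    thus "(real (\<alpha> l) * (?z $ l) ^ (\<alpha> l - 1) * w $ l) * (\<Prod>k\<in>UNIV - {l}. ?z $ k ^ \<alpha> k)
        = w $ l * real (\<alpha> l) * mon (\<alpha>(l := \<alpha> l - 1)) ?z" by simp
  qed
  ultimately show ?thesis unfolding monom_eval_def by simp
qed

lemma pdiff_sum_eq:
  assumes "is_poly p"
  shows "(\<Sum>\<alpha>\<in>{\<alpha>. p \<alpha> \<noteq> 0}. p \<alpha> * (real (\<alpha> j) * mon (\<alpha>(j := \<alpha> j - 1)) z)) = peval (pdiff j p) z"
proof -
  let ?S = "{\<alpha>. p \<alpha> \<noteq> 0}"
  let ?S1 = "{\<alpha>. p \<alpha> \<noteq> 0 \<and> 1 \<le> \<alpha> j}"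
  have fin: "finite ?S" using assms by (simp add: is_poly_def)
  have "(\<Sum>\<alpha>\<in>?S. p \<alpha> * (real (\<alpha> j) * mon (\<alpha>(j := \<alpha> j - 1)) z))
      = (\<Sum>\<alpha>\<in>?S1. p \<alpha> * (real (\<alpha> j) * mon (\<alpha>(j := \<alpha> j - 1)) z))"
    by (rule sum.mono_neutral_right) (use fin in auto)
  also have "\<dots> = peval (pdiff j p) z"
    unfolding peval_def
  proof (rule sum.reindex_bij_witness[where i="\<lambda>\<beta>. \<beta>(j := \<beta> j + 1)" and j="\<lambda>\<alpha>. \<alpha>(j := \<alpha> j - 1)"])
    fix \<alpha> assume "\<alpha> \<in> ?S1"
    thus "(\<alpha>(j := \<alpha> j - 1))(j := (\<alpha>(j := \<alpha> j - 1)) j + 1) = \<alpha>" by auto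
    show "\<alpha>(j := \<alpha> j - 1) \<in> {\<beta>. pdiff j p \<beta> \<noteq> 0}" using \<open>\<alpha> \<in> ?S1\<close>
      by (auto simp: pdiff_def)
    show "pdiff j p (\<alpha>(j := \<alpha> j - 1)) * mon (\<alpha>(j := \<alpha> j - 1)) z =
          p \<alpha> * (real (\<alpha> j) * mon (\<alpha>(j := \<alpha> j - 1)) z)"
      using \<open>\<alpha> \<in> ?S1\<close> by (auto simp: pdiff_def of_nat_diff)
  next
    fix \<beta> assume "\<beta> \<in> {\<beta>. pdiff j p \<beta> \<noteq> 0}"
    thus "(\<beta>(j := \<beta> j + 1))(j := (\<beta>(j := \<beta> j + 1)) j - 1) = \<beta>" by auto
    show "\<beta>(j := \<beta> j + 1) \<in> ?S1" using \<open>\<beta> \<in> {\<beta>. pdiff j p \<beta> \<noteq> 0}\<close>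
      by (auto simp: pdiff_def)
  qed
  finally show ?thesis .
qed

lemma DERIV_peval:
  assumes "is_poly p"
  shows "((\<lambda>t. peval p (a + t *\<^sub>R w)) has_real_derivative
     (\<Sum>j\<in>UNIV. w $ j * peval (pdiff j p) (a + t *\<^sub>R w))) (at t)"
proof -
  let ?z = "a + t *\<^sub>R w"
  let ?S = "{\<alpha>. p \<alpha> \<noteq> 0}"
  have "((\<lambda>t. peval p (a + t *\<^sub>R w)) has_real_derivative
     (\<Sum>\<alpha>\<in>?S. p \<alpha> * (\<Sum>j\<in>UNIV. w $ j * real (\<alpha> j) * mon (\<alpha>(j := \<alpha> j - 1)) ?z))) (at t)"
    unfolding peval_def by (intro DERIV_sum DERIV_cmult DERIV_mon)
  moreover have "(\<Sum>\<alpha>\<in>?S. p \<alpha> * (\<Sum>j\<in>UNIV. w $ j * real (\<alpha> j) * mon (\<alpha>(j := \<alpha> j - 1)) ?z))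
      = (\<Sum>j\<in>UNIV. w $ j * peval (pdiff j p) ?z)"
  proof -
    have "(\<Sum>\<alpha>\<in>?S. p \<alpha> * (\<Sum>j\<in>UNIV. w $ j * real (\<alpha> j) * mon (\<alpha>(j := \<alpha> j - 1)) ?z))
        = (\<Sum>j\<in>UNIV. w $ j * (\<Sum>\<alpha>\<in>?S. p \<alpha> * (real (\<alpha> j) * mon (\<alpha>(j := \<alpha> j - 1)) ?z)))"
      by (simp add: sum_distrib_left sum_distrib_right mult_ac sum.swap[where A="?S"])
    also have "\<dots> = (\<Sum>j\<in>UNIV. w $ j * peval (pdiff j p) ?z)"
      using pdiff_sum_eq[OF assms] by simp
    finally show ?thesis .
  qed
  ultimately show ?thesis by simp
qed

lemma DERIV2_peval:
  assumes "is_poly p"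
  shows "((\<lambda>t. \<Sum>i\<in>UNIV. w $ i * peval (pdiff i p) (a + t *\<^sub>R w)) has_real_derivative
     (\<Sum>i\<in>UNIV. w $ i * (\<Sum>j\<in>UNIV. w $ j * peval (pdiff j (pdiff i p)) (a + t *\<^sub>R w)))) (at t)"
  by (intro DERIV_sum DERIV_cmult DERIV_peval is_poly_pdiff assms)

lemma hess_sos:
  assumes "\<forall>x i j. peval (pdiff i (pdiff j p)) x = (\<Sum>k<r. peval (Q k i) x * peval (Q k j) x)"
  shows "(\<Sum>i\<in>UNIV. w $ i * (\<Sum>j\<in>UNIV. w $ j * peval (pdiff j (pdiff i p)) z))
       = (\<Sum>k<r. (\<Sum>i\<in>UNIV. w $ i * peval (Q k i) z) * (\<Sum>i\<in>UNIV. w $ i * peval (Q k i) z))"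
proof -
  have "(\<Sum>i\<in>UNIV. w $ i * (\<Sum>j\<in>UNIV. w $ j * peval (pdiff j (pdiff i p)) z))
      = (\<Sum>i\<in>UNIV. \<Sum>j\<in>UNIV. \<Sum>k<r. (w $ i * peval (Q k i) z) * (w $ j * peval (Q k j) z))"
    using assms by (simp add: sum_distrib_left mult_ac)
  also have "\<dots> = (\<Sum>k<r. \<Sum>i\<in>UNIV. \<Sum>j\<in>UNIV. (w $ i * peval (Q k i) z) * (w $ j * peval (Q k j) z))"
    by (simp add: sum.swap[where B="{..<r}"])
  also have "\<dots> = (\<Sum>k<r. (\<Sum>i\<in>UNIV. w $ i * peval (Q k i) z) * (\<Sum>i\<in>UNIV. w $ i * peval (Q k i) z))"
    by (simp add: sum_product)
  finally show ?thesis .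
qed



lemma pow_inv_mult:
  fixes s :: real
  assumes "s \<noteq> 0" "n \<le> N"
  shows "s ^ N * (1 / s) ^ n = s ^ (N - n)"
proof -
  have "s ^ N = s ^ (N - n) * s ^ n" using assms(2) by (simp add: power_add[symmetric])
  thus ?thesis using assms(1) by (simp add: power_one_over field_simps)
qed

lemma top_vanish:
  fixes a :: "nat \<Rightarrow> ('n::finite \<Rightarrow> nat) \<Rightarrow> real" and b :: "('n \<Rightarrow> nat) \<Rightarrow> real"
  assumes eq: "\<forall>x. (\<Sum>k<r. (\<Sum>\<alpha>\<in>MI D. a k \<alpha> * mon \<alpha> x) * (\<Sum>\<alpha>\<in>MI D. a k \<alpha> * mon \<alpha> x))
                 = (\<Sum>\<beta>\<in>MI (2 * e). b \<beta> * mon \<beta> x)"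
    and De: "e < D"
  shows "(\<Sum>k<r. (\<Sum>\<alpha>\<in>{\<alpha>\<in>MI D. mdeg \<alpha> = D}. a k \<alpha> * mon \<alpha> x) * (\<Sum>\<alpha>\<in>{\<alpha>\<in>MI D. mdeg \<alpha> = D}. a k \<alpha> * mon \<alpha> x)) = 0"
proof -
  define P where "P k s = (\<Sum>\<alpha>\<in>MI D. a k \<alpha> * s ^ (D - mdeg \<alpha>) * mon \<alpha> x)" for k s
  define L where "L s = (\<Sum>k<r. P k s * P k s)" for s :: real
  define R where "R s = (\<Sum>\<beta>\<in>MI (2 * e). b \<beta> * s ^ (2 * D - mdeg \<beta>) * mon \<beta> x)" for s :: real
  have LR: "L s = R s" if "s \<noteq> 0" for s
  proof -
    have Pk: "P k s = s ^ D * (\<Sum>\<alpha>\<in>MI D. a k \<alpha> * mon \<alpha> ((1 / s) *\<^sub>R x))" for k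
    proof -
      have "s ^ D * (\<Sum>\<alpha>\<in>MI D. a k \<alpha> * mon \<alpha> ((1 / s) *\<^sub>R x))
          = (\<Sum>\<alpha>\<in>MI D. a k \<alpha> * (s ^ D * (1 / s) ^ mdeg \<alpha>) * mon \<alpha> x)"
        by (simp add: sum_distrib_left monom_scale mult_ac)
      also have "\<dots> = P k s" unfolding P_def
        by (intro sum.cong refl) (simp add: pow_inv_mult[OF that] mindices_def)
      finally show ?thesis by simp
    qed
    have "L s = s ^ (2 * D) * (\<Sum>k<r. (\<Sum>\<alpha>\<in>MI D. a k \<alpha> * mon \<alpha> ((1 / s) *\<^sub>R x)) * (\<Sum>\<alpha>\<in>MI D. a k \<alpha> * mon \<alpha> ((1 / s) *\<^sub>R x)))"
      unfolding L_def Pk by (simp add: sum_distrib_left power_mult mult_ac power2_eq_square)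
    also have "\<dots> = s ^ (2 * D) * (\<Sum>\<beta>\<in>MI (2 * e). b \<beta> * mon \<beta> ((1 / s) *\<^sub>R x))"
      using eq by simp
    also have "\<dots> = (\<Sum>\<beta>\<in>MI (2 * e). b \<beta> * (s ^ (2 * D) * (1 / s) ^ mdeg \<beta>) * mon \<beta> x)"
      by (simp add: sum_distrib_left monom_scale mult_ac)
    also have "\<dots> = R s" unfolding R_def
      by (intro sum.cong refl) (use De in \<open>simp add: pow_inv_mult[OF that] mindices_def\<close>)
    finally show ?thesis .
  qed
  have cL: "isCont L 0" unfolding L_def P_def by (intro continuous_intros)
  have cR: "isCont R 0" unfolding R_def by (intro continuous_intros)
  have "(L \<longlongrightarrow> L 0) (at 0)" using cL by (simp add: isCont_def)
  moreover have "eventually (\<lambda>s. L s = R s) (at 0)"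
    by (auto simp: eventually_at_filter LR)
  ultimately have "(R \<longlongrightarrow> L 0) (at 0)" by (simp add: tendsto_cong)
  moreover have "(R \<longlongrightarrow> R 0) (at 0)" using cR by (simp add: isCont_def)
  ultimately have L0R0: "L 0 = R 0" by (rule tendsto_unique[rotated]) simp
  have "R 0 = 0" unfolding R_def
    by (intro sum.neutral ballI) (use De in \<open>auto simp: mindices_def\<close>)
  moreover have "P k 0 = (\<Sum>\<alpha>\<in>{\<alpha>\<in>MI D. mdeg \<alpha> = D}. a k \<alpha> * mon \<alpha> x)" for k
  proof -
    have "P k 0 = (\<Sum>\<alpha>\<in>MI D. if mdeg \<alpha> = D then a k \<alpha> * mon \<alpha> x else 0)"
      unfolding P_def by (intro sum.cong refl) (auto simp: mindices_def)
    thus ?thesis by (simp add: sum.inter_filter[OF finite_mindices])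
  qed
  ultimately show ?thesis using L0R0 unfolding L_def by simp
qed

lemma sos_deg:
  fixes g :: "nat \<Rightarrow> real^'n::finite \<Rightarrow> real" and r :: nat
  assumes "\<forall>k<r. g k \<in> Pk D" "h \<in> Pk (2 * e)" "\<forall>x. (\<Sum>k<r. g k x * g k x) = h x"
  shows "\<forall>k<r. g k \<in> Pk e"
  using assms(1)
proof (induction D rule: less_induct)
  case (less D)
  show ?case
  proof (cases "D \<le> e")
    case True thus ?thesis using less.prems Pk_mono by blast
  next
    case False
    hence De: "e < D" by simp
    have "\<forall>k. \<exists>a. k < r \<longrightarrow> g k = (\<lambda>x. \<Sum>\<alpha>\<in>MI D. a \<alpha> * mon \<alpha> x)"
      using less.prems unfolding Pk_def by blast
    then obtain a where a: "\<And>k. k < r \<Longrightarrow> g k = (\<lambda>x. \<Sum>\<alpha>\<in>MI D. a k \<alpha> * mon \<alpha> x)"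
      by metis
    obtain b where b: "h = (\<lambda>x. \<Sum>\<beta>\<in>MI (2 * e). b \<beta> * mon \<beta> x)"
      using assms(2) unfolding Pk_def by blast
    have eq: "\<forall>x. (\<Sum>k<r. (\<Sum>\<alpha>\<in>MI D. a k \<alpha> * mon \<alpha> x) * (\<Sum>\<alpha>\<in>MI D. a k \<alpha> * mon \<alpha> x))
                 = (\<Sum>\<beta>\<in>MI (2 * e). b \<beta> * mon \<beta> x)"
    proof
      fix x
      have "(\<Sum>k<r. (\<Sum>\<alpha>\<in>MI D. a k \<alpha> * mon \<alpha> x) * (\<Sum>\<alpha>\<in>MI D. a k \<alpha> * mon \<alpha> x))
          = (\<Sum>k<r. g k x * g k x)" by (intro sum.cong refl) (simp add: a)
      also have "\<dots> = h x" using assms(3) by simp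
      finally show "(\<Sum>k<r. (\<Sum>\<alpha>\<in>MI D. a k \<alpha> * mon \<alpha> x) * (\<Sum>\<alpha>\<in>MI D. a k \<alpha> * mon \<alpha> x))
                 = (\<Sum>\<beta>\<in>MI (2 * e). b \<beta> * mon \<beta> x)" using b by simp
    qed
    have top0: "(\<Sum>\<alpha>\<in>{\<alpha>\<in>MI D. mdeg \<alpha> = D}. a k \<alpha> * mon \<alpha> x) = 0" if "k < r" for k x
    proof -
      let ?T = "\<lambda>k. (\<Sum>\<alpha>\<in>{\<alpha>\<in>MI D. mdeg \<alpha> = D}. a k \<alpha> * mon \<alpha> x)"
      have "(\<Sum>k<r. ?T k * ?T k) = 0" by (rule top_vanish[OF eq De])
      hence "\<forall>k\<in>{..<r}. ?T k * ?T k = 0" by (subst (asm) sum_nonneg_eq_0_iff) auto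
      thus ?thesis using that by simp
    qed
    have "g k \<in> Pk (D - 1)" if "k < r" for k
    proof -
      have z: "a k \<alpha> = 0" if "\<alpha> \<in> {\<alpha>\<in>MI D. mdeg \<alpha> = D}" for \<alpha>
        by (rule coeff_unique[OF _ top0[OF \<open>k < r\<close>] that]) (simp add: finite_mindices)
      have "g k = (\<lambda>x. \<Sum>\<alpha>\<in>MI (D - 1). a k \<alpha> * mon \<alpha> x)"
      proof
        fix x
        show "g k x = (\<Sum>\<alpha>\<in>MI (D - 1). a k \<alpha> * mon \<alpha> x)"
          unfolding a[OF that]
          by (rule sum.mono_neutral_right) (use z finite_mindices in \<open>auto simp: mindices_def\<close>)
      qed
      thus ?thesis by (rule Pk_I)
    qed
    moreover have "D - 1 < D" using De by simp
    ultimately show ?thesis using less.IH by blast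
  qed
qed



lemma MI0: "MI 0 = {\<lambda>_. 0}"
  by (auto simp: mindices_def mdeg_zero_iff)

lemma jensen:
  fixes p :: "('n::finite) mpoly_coeffs" and d :: nat
  assumes P: "is_poly p" and S: "sos_convex p" and supp: "{\<alpha>. p \<alpha> \<noteq> 0} \<subseteq> MI (2 * d)"
    and y0: "y (\<lambda>_. 0) = 1" and M: "moment_psd d y"
  shows "peval p (\<chi> i. y (unitv i)) \<le> riesz p y"
proof (cases "d = 0")
  case True
  have "peval p (\<chi> i. y (unitv i)) = (\<Sum>\<alpha>\<in>MI 0. p \<alpha> * mon \<alpha> (\<chi> i. y (unitv i)))"
    using peval_rep[OF P] supp True by simp
  moreover have "riesz p y = (\<Sum>\<alpha>\<in>MI 0. p \<alpha> * y \<alpha>)"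
    using riesz_rep[OF P] supp True by simp
  ultimately show ?thesis by (simp add: MI0 y0)
next
  case False
  hence d1: "1 \<le> d" by simp
  define u :: "real^'n" where "u = (\<chi> i. y (unitv i))"
  define K where "K = 2 * d"
  have K1: "1 \<le> K" using d1 by (simp add: K_def)
  obtain r :: nat and Q :: "nat \<Rightarrow> 'n \<Rightarrow> 'n mpoly_coeffs" where Qp: "\<forall>k<r. \<forall>i. is_poly (Q k i)"
    and H: "\<forall>x i j. peval (pdiff i (pdiff j p)) x = (\<Sum>k<r. peval (Q k i) x * peval (Q k j) x)"
    using S unfolding sos_convex_def by blast
  have Qdeg: "\<forall>k<r. peval (Q k i) \<in> Pk (d - 1)" for i
  proof -
    define D where "D = Max ((\<lambda>k. pdeg (Q k i)) ` {..<r})"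
    have "\<forall>k<r. peval (Q k i) \<in> Pk D"
    proof (intro allI impI)
      fix k assume "k < r"
      hence "pdeg (Q k i) \<le> D" unfolding D_def by (intro Max_ge) auto
      hence "{\<alpha>. Q k i \<alpha> \<noteq> 0} \<subseteq> MI D"
        using supp_pdeg[of "Q k i"] Qp \<open>k < r\<close> mindices_mono by blast
      thus "peval (Q k i) \<in> Pk D" using Qp \<open>k < r\<close> by (intro peval_Pk) auto
    qed
    moreover have "peval (pdiff i (pdiff i p)) \<in> Pk (2 * (d - 1))"
    proof (rule peval_Pk)
      show "is_poly (pdiff i (pdiff i p))" by (intro is_poly_pdiff P)
      have "{\<alpha>. pdiff i (pdiff i p) \<alpha> \<noteq> 0} \<subseteq> MI (2 * d - 1 - 1)"
        by (intro supp_pdiff supp)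
      moreover have e: "2 * d - 1 - 1 = 2 * (d - 1)" by arith
      ultimately show "{\<alpha>. pdiff i (pdiff i p) \<alpha> \<noteq> 0} \<subseteq> MI (2 * (d - 1))"
        by (simp only: e)
    qed
    moreover have "\<forall>x. (\<Sum>k<r. peval (Q k i) x * peval (Q k i) x) = peval (pdiff i (pdiff i p)) x"
      using H by simp
    ultimately show ?thesis by (rule sos_deg)
  qed
  define G where "G = (\<lambda>t x. peval p (u + t *\<^sub>R (x - u)))"
  have "G \<in> Tk K" unfolding G_def
    by (rule Pk_compose, rule peval_Pk[OF P]) (use supp in \<open>simp add: K_def\<close>)
  then obtain F c where F: "finite F" "snd ` F \<subseteq> MI K"
    and Geq: "G = (\<lambda>t x. \<Sum>q\<in>F. c q * t ^ fst q * mon (snd q) x)"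
    by (rule Tk_E)
  define c1 :: "nat \<times> ('n \<Rightarrow> nat) \<Rightarrow> real" where "c1 q = c q * real (fst q)" for q
  define e1 :: "nat \<times> ('n \<Rightarrow> nat) \<Rightarrow> nat" where "e1 q = fst q - 1" for q
  define c2 :: "nat \<times> ('n \<Rightarrow> nat) \<Rightarrow> real" where "c2 q = c1 q * real (e1 q)" for q
  define e2 :: "nat \<times> ('n \<Rightarrow> nat) \<Rightarrow> nat" where "e2 q = e1 q - 1" for q
  define h where "h t = (\<Sum>q\<in>F. c q * t ^ fst q * y (snd q))" for t
  define h1 where "h1 t = (\<Sum>q\<in>F. c1 q * t ^ e1 q * y (snd q))" for t
  define h2 where "h2 t = (\<Sum>q\<in>F. c2 q * t ^ e2 q * y (snd q))" for t
  define G1 where "G1 t x = (\<Sum>q\<in>F. c1 q * t ^ e1 q * mon (snd q) x)" for t x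
  define G2 where "G2 t x = (\<Sum>q\<in>F. c2 q * t ^ e2 q * mon (snd q) x)" for t x
  have dh: "(h has_real_derivative h1 t) (at t)" for t
    unfolding h_def h1_def c1_def e1_def by (rule DERIV_tsum)
  have dh1: "(h1 has_real_derivative h2 t) (at t)" for t
    unfolding h1_def h2_def c2_def e2_def by (rule DERIV_tsum)
  have Gx: "(\<lambda>t. G t x) = (\<lambda>t. \<Sum>q\<in>F. c q * t ^ fst q * mon (snd q) x)" for x
    using Geq by simp
  have dG: "((\<lambda>t. G t x) has_real_derivative G1 t x) (at t)" for t x
    unfolding Gx G1_def c1_def e1_def by (rule DERIV_tsum)
  have dG1: "((\<lambda>t. G1 t x) has_real_derivative G2 t x) (at t)" for t x
    unfolding G1_def G2_def c2_def e2_def by (rule DERIV_tsum)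
  have Lh: "Lf K y (G t) = h t" for t
    by (simp add: Geq h_def Lf_Tk[OF F])
  have Lh1: "Lf K y (G1 t) = h1 t" for t
    unfolding G1_def h1_def by (rule Lf_Tk[OF F])
  have Lh2: "Lf K y (G2 t) = h2 t" for t
    unfolding G2_def h2_def by (rule Lf_Tk[OF F])
  define s where "s k t x = (\<Sum>i\<in>UNIV. (x - u) $ i * peval (Q k i) (u + t *\<^sub>R (x - u)))" for k t x
  have G1eq: "G1 t x = (\<Sum>i\<in>UNIV. (x - u) $ i * peval (pdiff i p) (u + t *\<^sub>R (x - u)))" for t x
  proof -
    have "((\<lambda>t. G t x) has_real_derivative (\<Sum>i\<in>UNIV. (x - u) $ i * peval (pdiff i p) (u + t *\<^sub>R (x - u)))) (at t)"
      unfolding G_def by (rule DERIV_peval[OF P])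
    thus ?thesis using dG by (rule DERIV_unique[rotated])
  qed
  have G2eq: "G2 t x = (\<Sum>k<r. s k t x * s k t x)" for t x
  proof -
    have "(\<lambda>t. G1 t x) = (\<lambda>t. \<Sum>i\<in>UNIV. (x - u) $ i * peval (pdiff i p) (u + t *\<^sub>R (x - u)))"
      using G1eq by simp
    note G1fun = this
    have "((\<lambda>t. G1 t x) has_real_derivative
      (\<Sum>i\<in>UNIV. (x - u) $ i * (\<Sum>j\<in>UNIV. (x - u) $ j * peval (pdiff j (pdiff i p)) (u + t *\<^sub>R (x - u))))) (at t)"
      unfolding G1fun by (rule DERIV2_peval[OF P])
    hence "G2 t x = (\<Sum>i\<in>UNIV. (x - u) $ i * (\<Sum>j\<in>UNIV. (x - u) $ j * peval (pdiff j (pdiff i p)) (u + t *\<^sub>R (x - u))))"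
      using dG1 by (rule DERIV_unique[rotated])
    also have "\<dots> = (\<Sum>k<r. s k t x * s k t x)"
      unfolding s_def by (rule hess_sos[OF H])
    finally show ?thesis .
  qed
  have s_Pk: "s k t \<in> Pk d" if "k < r" for k t
  proof -
    have "(\<lambda>x. \<Sum>i\<in>UNIV. (x $ i + (- u $ i)) * peval (Q k i) (u + t *\<^sub>R (x - u))) \<in> Pk d"
    proof (rule Pk_sum)
      fix i
      have A: "(\<lambda>x. x $ i + (- u $ i)) \<in> Pk 1" by (intro Pk_add Pk_coord Pk_const) simp
      have B: "(\<lambda>x. peval (Q k i) (u + t *\<^sub>R (x - u))) \<in> Pk (d - 1)"
        using Tk_at[OF Pk_compose[OF Qdeg[rule_format, OF that], where u=u], where t=t] by simp
      show "(\<lambda>x. (x $ i + (- u $ i)) * peval (Q k i) (u + t *\<^sub>R (x - u))) \<in> Pk d"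
        using Pk_mult[OF A B] d1 by simp
    qed simp
    thus ?thesis unfolding s_def by simp
  qed
  have h2pos: "h2 t \<ge> 0" for t
  proof -
    have "h2 t = Lf K y (\<lambda>x. \<Sum>k<r. s k t x * s k t x)"
    proof -
      have "G2 t = (\<lambda>x. \<Sum>k<r. s k t x * s k t x)" by (rule ext) (rule G2eq)
      thus ?thesis unfolding Lh2[symmetric] by simp
    qed
    also have "\<dots> = (\<Sum>k<r. Lf K y (\<lambda>x. s k t x * s k t x))"
      by (rule Lf_sum) (use Pk_mult[OF s_Pk s_Pk] in \<open>auto simp: K_def mult_2\<close>)
    also have "\<dots> \<ge> 0"
      by (intro sum_nonneg) (use moment_pos[OF M s_Pk] in \<open>auto simp: K_def\<close>)
    finally show ?thesis .
  qed
  have h10: "h1 0 = 0"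
  proof -
    define Dv where "Dv i = peval (pdiff i p) u" for i
    have "G1 0 = (\<lambda>x. \<Sum>i\<in>UNIV. Dv i * x $ i + (- (Dv i * u $ i)))"
      by (rule ext) (simp add: G1eq Dv_def algebra_simps sum.distrib)
    hence "h1 0 = Lf K y (\<lambda>x. \<Sum>i\<in>UNIV. Dv i * x $ i + (- (Dv i * u $ i)))"
      using Lh1[of 0] by simp
    also have "\<dots> = (\<Sum>i\<in>UNIV. Lf K y (\<lambda>x. Dv i * x $ i + (- (Dv i * u $ i))))"
      by (rule Lf_sum) (simp, rule Pk_add[OF Pk_scale[OF Pk_coord[OF K1]] Pk_const])
    also have "\<dots> = (\<Sum>i\<in>UNIV. Dv i * y (unitv i) + (- (Dv i * u $ i)) * y (\<lambda>_. 0))"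
      by (intro sum.cong refl, subst Lf_add)
         (auto intro!: Pk_scale Pk_coord Pk_const K1 simp: Lf_scale[OF Pk_coord[OF K1]] Lf_coord[OF K1] Lf_const)
    also have "\<dots> = 0" by (simp add: y0 u_def)
    finally show ?thesis .
  qed
  have h1pos: "h1 t \<ge> 0" if "0 \<le> t" for t
  proof -
    have "h1 0 \<le> h1 t"
      by (rule DERIV_nonneg_imp_nondecreasing[OF that]) (use dh1 h2pos in blast)
    thus ?thesis using h10 by simp
  qed
  have "h 0 \<le> h 1"
    by (rule DERIV_nonneg_imp_nondecreasing) (use dh h1pos in auto)
  moreover have "h 0 = peval p u"
  proof -
    have "G 0 = (\<lambda>x. peval p u)" by (simp add: G_def)
    thus ?thesis using Lh[of 0] by (simp add: Lf_const y0)
  qed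
  moreover have "h 1 = riesz p y"
  proof -
    have "G 1 = peval p" by (simp add: G_def)
    thus ?thesis using Lh[of 1] Lf_peval[OF P supp] by (simp add: K_def)
  qed
  ultimately show ?thesis by (simp add: u_def)
qed



lemma riesz_neg: "riesz (\<lambda>\<alpha>. - p \<alpha>) y = - riesz p y"
  by (simp add: riesz_def sum_negf)

lemma peval_neg: "peval (\<lambda>\<alpha>. - p \<alpha>) x = - peval p x"
  by (simp add: peval_def sum_negf)

lemma is_poly_neg: "is_poly p \<Longrightarrow> is_poly (\<lambda>\<alpha>. - p \<alpha>)"
  by (simp add: is_poly_def)

lemma riesz_point: "riesz p (\<lambda>\<alpha>. mon \<alpha> x) = peval p x"
  by (simp add: riesz_def peval_def)

lemma moment_point:
  fixes x :: "real^'n::finite"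
  shows "moment_psd k (\<lambda>\<alpha>. mon \<alpha> x)"
  unfolding moment_psd_def
proof
  fix u :: "('n \<Rightarrow> nat) \<Rightarrow> real"
  have "(\<Sum>\<alpha>\<in>MI k. \<Sum>\<beta>\<in>MI k. u \<alpha> * u \<beta> * mon (\<lambda>i. \<alpha> i + \<beta> i) x)
      = (\<Sum>\<alpha>\<in>MI k. u \<alpha> * mon \<alpha> x) * (\<Sum>\<alpha>\<in>MI k. u \<alpha> * mon \<alpha> x)"
    by (simp add: sum_product monom_add mult_ac)
  also have "\<dots> \<ge> 0" by simp
  finally show "0 \<le> (\<Sum>\<alpha>\<in>MI k. \<Sum>\<beta>\<in>MI k. u \<alpha> * u \<beta> * mon (\<lambda>i. \<alpha> i + \<beta> i) x)" .
qed

lemma riesz_comb: "riesz p (\<lambda>\<alpha>. a * y1 \<alpha> + b * y2 \<alpha>) = a * riesz p y1 + b * riesz p y2"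
  by (simp add: riesz_def sum.distrib sum_distrib_left algebra_simps)

lemma moment_comb:
  fixes y1 y2 :: "('n::finite \<Rightarrow> nat) \<Rightarrow> real"
  assumes "moment_psd k y1" "moment_psd k y2" "0 \<le> a" "0 \<le> b"
  shows "moment_psd k (\<lambda>\<alpha>. a * y1 \<alpha> + b * y2 \<alpha>)"
  unfolding moment_psd_def
proof
  fix u :: "('n \<Rightarrow> nat) \<Rightarrow> real"
  let ?S = "\<lambda>y. (\<Sum>\<alpha>\<in>MI k. \<Sum>\<beta>\<in>MI k. u \<alpha> * u \<beta> * y (\<lambda>i. \<alpha> i + \<beta> i))"
  have "?S (\<lambda>\<alpha>. a * y1 \<alpha> + b * y2 \<alpha>) = a * ?S y1 + b * ?S y2"
    by (simp add: sum.distrib sum_distrib_left algebra_simps)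
  moreover have "?S y1 \<ge> 0" "?S y2 \<ge> 0" using assms(1,2) unfolding moment_psd_def by blast+
  ultimately show "?S (\<lambda>\<alpha>. a * y1 \<alpha> + b * y2 \<alpha>) \<ge> 0" using assms(3,4) by simp
qed

lemma V1_I:
  "y (\<lambda>_. 0) = 1 \<Longrightarrow> moment_psd (d0 f I c) y \<Longrightarrow> \<forall>j\<in>I. riesz (c j) y \<ge> 0 \<Longrightarrow>
   \<forall>i. v $ i > riesz (f i) y \<Longrightarrow> v \<in> V1 f I c"
  unfolding V1_def by blast

lemma V1_convex:
  fixes f :: "'m::finite \<Rightarrow> ('n::finite) mpoly_coeffs" and c :: "'j \<Rightarrow> 'n mpoly_coeffs"
  shows "convex (V1 f I c)"
proof (rule convexI)
  fix v1 v2 :: "real^'m" and a b :: real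
  assume v1: "v1 \<in> V1 f I c" and v2: "v2 \<in> V1 f I c" and ab: "0 \<le> a" "0 \<le> b" "a + b = 1"
  obtain y1 where y1: "y1 (\<lambda>_. 0) = 1" "moment_psd (d0 f I c) y1" "\<forall>j\<in>I. riesz (c j) y1 \<ge> 0"
      "\<forall>i. v1 $ i > riesz (f i) y1" using v1 unfolding V1_def by blast
  obtain y2 where y2: "y2 (\<lambda>_. 0) = 1" "moment_psd (d0 f I c) y2" "\<forall>j\<in>I. riesz (c j) y2 \<ge> 0"
      "\<forall>i. v2 $ i > riesz (f i) y2" using v2 unfolding V1_def by blast
  let ?y = "\<lambda>\<alpha>. a * y1 \<alpha> + b * y2 \<alpha>"
  have "?y (\<lambda>_. 0) = 1" using y1 y2 ab by simp
  moreover have "moment_psd (d0 f I c) ?y" by (rule moment_comb) (use y1 y2 ab in auto)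
  moreover have "\<forall>j\<in>I. riesz (c j) ?y \<ge> 0" using y1 y2 ab by (simp add: riesz_comb)
  moreover have "\<forall>i. (a *\<^sub>R v1 + b *\<^sub>R v2) $ i > riesz (f i) ?y"
  proof
    fix i
    have "a * riesz (f i) y1 \<le> a * v1 $ i" "b * riesz (f i) y2 \<le> b * v2 $ i"
      using y1(4) y2(4) ab by (auto intro: mult_left_mono less_imp_le)
    moreover have "a * riesz (f i) y1 < a * v1 $ i \<or> b * riesz (f i) y2 < b * v2 $ i"
      using y1(4) y2(4) ab by (cases "a = 0") auto
    ultimately show "(a *\<^sub>R v1 + b *\<^sub>R v2) $ i > riesz (f i) ?y"
      by (auto simp: riesz_comb)
  qed
  ultimately show "a *\<^sub>R v1 + b *\<^sub>R v2 \<in> V1 f I c" by (rule V1_I)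
qed

lemma const_vec_norm:
  fixes \<delta> :: real
  assumes "0 \<le> \<delta>"
  shows "norm ((\<chi> i. \<delta>) :: real^'m::finite) \<le> real CARD('m) * \<delta>"
proof -
  have "norm ((\<chi> i. \<delta>) :: real^'m) \<le> (\<Sum>i\<in>UNIV. \<bar>(\<chi> i. \<delta>) $ (i::'m)\<bar>)" by (rule norm_le_l1_cart)
  also have "\<dots> = real CARD('m) * \<delta>" using assms by simp
  finally show ?thesis .
qed



lemma vec_const_dist:
  fixes v :: "real^'m::finite" and e :: real
  assumes "e > 0"
  defines "\<delta> \<equiv> e / (2 * real CARD('m))"
  shows "\<delta> > 0" "norm ((\<chi> i. \<delta>) :: real^'m) < e"
proof -
  have C: "real CARD('m) > 0" by simp
  show "\<delta> > 0" unfolding \<delta>_def using assms C by simp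
  hence "norm ((\<chi> i. \<delta>) :: real^'m) \<le> real CARD('m) * \<delta>" by (intro const_vec_norm) simp
  also have "\<dots> = e / 2" unfolding \<delta>_def using C by simp
  also have "\<dots> < e" using assms by simp
  finally show "norm ((\<chi> i. \<delta>) :: real^'m) < e" .
qed

theorem theorem3p3:
  fixes f :: "'m::finite \<Rightarrow> ('n::finite) mpoly_coeffs"
    and c :: "'j \<Rightarrow> 'n mpoly_coeffs"
    and I :: "'j set"
  assumes "finite I"
    and "\<forall>i. is_poly (f i)" and "\<forall>j\<in>I. is_poly (c j)"
    and "interior (feasible I c) \<noteq> {}"
    and "\<forall>i. sos_convex (f i)"
    and "\<forall>j\<in>I. sos_convex (\<lambda>\<alpha>. - c j \<alpha>)"
  shows "interior (upset f (feasible I c)) = V1 f I c \<and>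
         (\<forall>v\<in>fmap f ` feasible I c.
            weakly_pareto_value f (feasible I c) v \<longleftrightarrow> v \<in> frontier (closure (V1 f I c)))"
proof -
  define K where "K = feasible I c"
  define d where "d = d0 f I c"
  define W where "W = {v :: real^'m. \<exists>x\<in>K. \<forall>i. peval (f i) x < v $ i}"
  have fdeg: "{\<alpha>. f i \<alpha> \<noteq> 0} \<subseteq> MI (2 * d)" for i
  proof -
    have "pdeg (f i) \<le> dmax f" unfolding dmax_def by (rule Max_ge) auto
    moreover have "(dmax f + 1) div 2 \<le> d" unfolding d_def d0_def
      by (rule Max_ge) (use assms(1) in auto)
    ultimately have "pdeg (f i) \<le> 2 * d" by arith
    thus ?thesis using supp_pdeg[of "f i"] assms(2) mindices_mono by blast
  qed
  have cdeg: "{\<alpha>. c j \<alpha> \<noteq> 0} \<subseteq> MI (2 * d)" if "j \<in> I" for j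
  proof -
    have "(pdeg (c j) + 1) div 2 \<le> d" unfolding d_def d0_def
      by (rule Max_ge) (use assms(1) that in auto)
    hence "pdeg (c j) \<le> 2 * d" by arith
    thus ?thesis using supp_pdeg[of "c j"] assms(3) that mindices_mono by blast
  qed
  have V1W: "V1 f I c = W"
  proof
    show "V1 f I c \<subseteq> W"
    proof
      fix v assume "v \<in> V1 f I c"
      then obtain y where y: "y (\<lambda>_. 0) = 1" "moment_psd d y" "\<forall>j\<in>I. riesz (c j) y \<ge> 0"
        "\<forall>i. v $ i > riesz (f i) y" unfolding V1_def d_def by blast
      define x :: "real^'n" where "x = (\<chi> i. y (unitv i))"
      have "x \<in> K" unfolding K_def feasible_def
      proof (intro CollectI ballI)
        fix j assume j: "j \<in> I"
        have "peval (\<lambda>\<alpha>. - c j \<alpha>) x \<le> riesz (\<lambda>\<alpha>. - c j \<alpha>) y" unfolding x_def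
          by (rule jensen) (use assms(3,6) cdeg[OF j] j y in \<open>auto simp: is_poly_neg\<close>)
        hence "riesz (c j) y \<le> peval (c j) x" by (simp add: peval_neg riesz_neg)
        moreover have "riesz (c j) y \<ge> 0" using y(3) j by blast
        ultimately show "peval (c j) x \<ge> 0" by linarith
      qed
      moreover have "peval (f i) x < v $ i" for i
      proof -
        have "peval (f i) x \<le> riesz (f i) y" unfolding x_def
          by (rule jensen) (use assms(2,5) fdeg y in auto)
        thus ?thesis using y(4) by (meson le_less_trans)
      qed
      ultimately show "v \<in> W" unfolding W_def by blast
    qed
  next
    show "W \<subseteq> V1 f I c"
    proof
      fix v assume "v \<in> W"
      then obtain x where x: "x \<in> K" "\<forall>i. peval (f i) x < v $ i" unfolding W_def by blast
      show "v \<in> V1 f I c"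
        by (rule V1_I[where y="\<lambda>\<alpha>. mon \<alpha> x"])
          (use x in \<open>auto simp: moment_point riesz_point K_def feasible_def\<close>)
    qed
  qed
  have Wopen: "open W"
  proof -
    have "W = (\<Union>x\<in>K. \<Inter>i\<in>UNIV. {v. peval (f i) x < v $ i})" unfolding W_def by auto
    also have "open \<dots>"
      by (intro open_UN ballI open_INT open_Collect_less continuous_intros) auto
    finally show ?thesis .
  qed
  have WU: "W \<subseteq> upset f K"
    unfolding W_def upset_def fmap_def by (auto intro: less_imp_le)
  have int: "interior (upset f K) = W"
  proof
    show "W \<subseteq> interior (upset f K)" by (rule interior_maximal[OF WU Wopen])
    show "interior (upset f K) \<subseteq> W"
    proof
      fix v assume "v \<in> interior (upset f K)"
      then obtain e where e: "e > 0" "ball v e \<subseteq> upset f K" by (auto simp: mem_interior)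
      define \<delta> where "\<delta> = e / (2 * real CARD('m))"
      have \<delta>: "\<delta> > 0" "norm ((\<chi> i. \<delta>) :: real^'m) < e"
        using vec_const_dist[OF e(1)] unfolding \<delta>_def by auto
      have "v - (\<chi> i. \<delta>) \<in> ball v e" using \<delta>(2) by (simp add: dist_norm)
      hence "v - (\<chi> i. \<delta>) \<in> upset f K" using e(2) by blast
      then obtain x where x: "x \<in> K" "\<forall>i. fmap f x $ i \<le> (v - (\<chi> i. \<delta>)) $ i"
        unfolding upset_def by blast
      have "peval (f i) x < v $ i" for i
        using x(2)[rule_format, of i] \<delta>(1) by (simp add: fmap_def)
      thus "v \<in> W" unfolding W_def using x(1) by blast
    qed
  qed
  have convW: "convex W" using V1_convex[of f I c] V1W by simp
  have intcl: "interior (closure W) = W"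
    using convex_interior_closure[OF convW] interior_open[OF Wopen] by simp
  have front: "frontier (closure W) = closure W - W"
    unfolding frontier_def closure_closure intcl ..
  have second: "weakly_pareto_value f K v \<longleftrightarrow> v \<in> frontier (closure W)" if v: "v \<in> fmap f ` K" for v
  proof -
    obtain x0 where x0: "x0 \<in> K" "v = fmap f x0" using v by blast
    have fx0: "peval (f i) x0 = v $ i" for i using x0(2) by (simp add: fmap_def)
    have vcl: "v \<in> closure W"
      unfolding closure_approachable
    proof (intro allI impI)
      fix e :: real assume e: "e > 0"
      define \<delta> where "\<delta> = e / (2 * real CARD('m))"
      have \<delta>: "\<delta> > 0" "norm ((\<chi> i. \<delta>) :: real^'m) < e"
        using vec_const_dist[OF e] unfolding \<delta>_def by auto
      have "\<forall>i. peval (f i) x0 < (v + (\<chi> i. \<delta>)) $ i" using fx0 \<delta>(1) by simp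
      hence "v + (\<chi> i. \<delta>) \<in> W" unfolding W_def using x0(1) by blast
      moreover have "dist (v + (\<chi> i. \<delta>)) v < e" using \<delta>(2) by (simp add: dist_norm)
      ultimately show "\<exists>y\<in>W. dist y v < e" by blast
    qed
    have "weakly_pareto_value f K v \<longleftrightarrow> v \<notin> W"
    proof
      assume "weakly_pareto_value f K v"
      then obtain xs where xs: "weakly_pareto f K xs" "v = fmap f xs"
        unfolding weakly_pareto_value_def by blast
      show "v \<notin> W"
      proof
        assume "v \<in> W"
        then obtain x where "x \<in> K" "\<forall>i. peval (f i) x < v $ i" unfolding W_def by blast
        hence "\<exists>x\<in>K. \<forall>i. peval (f i) x < peval (f i) xs" using xs(2) by (auto simp: fmap_def)
        thus False using xs(1) unfolding weakly_pareto_def by blast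
      qed
    next
      assume "v \<notin> W"
      hence "\<not> (\<exists>x\<in>K. \<forall>i. peval (f i) x < peval (f i) x0)" unfolding W_def using fx0 by auto
      hence "weakly_pareto f K x0" using x0(1) unfolding weakly_pareto_def by blast
      thus "weakly_pareto_value f K v" unfolding weakly_pareto_value_def using x0(2) by blast
    qed
    thus ?thesis using vcl front by blast
  qed
  show ?thesis
    using int V1W second unfolding K_def by simp
qed

end
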